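(* Let $A,B$ be nonzero integers, and let $\{u_n\}_{n\ge0}$, $\{v_n\}_{n\ge0}$ be the Lucas sequences defined by $u_0=0$, $u_1=1$, $u_n=Au_{n-1}-Bu_{n-2}$ for $n\ge2$, and $v_0=2$, $v_1=A$, $v_n=Av_{n-1}-Bv_{n-2}$ for $n\ge2$. Let $\Delta=A^2-4B$. For each positive integer $n$, let $w_n$ be the largest divisor of $u_n$ that is coprime to each of $u_1,u_2,\ldots,u_{n-1}$. Then for every integer $n\ge5$, $$\sum_{j=1}^{n-1}\frac{v_j}{u_j}\equiv\frac{(n^2-1)\Delta}{6}\cdot\frac{u_n}{v_n}\pmod{w_n^2}.$$
   Context: A congruence between rational numbers modulo an integer $M$ means that the difference, written as a fraction whose denominator is coprime to $M$, has numerator divisible by $M$. *)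

theory Defs
  imports Complex_Main "HOL-Computational_Algebra.Primes"
begin

fun lucas_u :: "int \<Rightarrow> int \<Rightarrow> nat \<Rightarrow> int" where
  "lucas_u A B 0 = 0"
| "lucas_u A B (Suc 0) = 1"
| "lucas_u A B (Suc (Suc n)) = A * lucas_u A B (Suc n) - B * lucas_u A B n"

fun lucas_v :: "int \<Rightarrow> int \<Rightarrow> nat \<Rightarrow> int" where
  "lucas_v A B 0 = 2"
| "lucas_v A B (Suc 0) = A"
| "lucas_v A B (Suc (Suc n)) = A * lucas_v A B (Suc n) - B * lucas_v A B n"

definition lucas_w :: "int \<Rightarrow> int \<Rightarrow> nat \<Rightarrow> int" where
  "lucas_w A B n = (GREATEST d::int. d dvd lucas_u A B n \<and>
                      (\<forall>j\<in>{1..<n}. coprime d (lucas_u A B j)))"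

definition rat_cong :: "rat \<Rightarrow> rat \<Rightarrow> int \<Rightarrow> bool" where
  "rat_cong a b M = (\<exists>p q::int. q \<noteq> 0 \<and> coprime q M \<and>
                        a - b = of_int p / of_int q \<and> M dvd p)"

end

theory Submission
  imports Defs
begin


lemma rec_eq:
  fixes f g :: "nat \<Rightarrow> int"
  assumes "\<And>j. f (Suc (Suc j)) = A * f (Suc j) - B * f j"
      and "\<And>j. g (Suc (Suc j)) = A * g (Suc j) - B * g j"
      and "f 0 = g 0" and "f 1 = g 1"
  shows "f j = g j"
proof -
  have "f j = g j \<and> f (Suc j) = g (Suc j)"
    by (induction j) (use assms in auto)
  thus ?thesis by simp
qed

lemma v_u: "lucas_v A B j = 2 * lucas_u A B (Suc j) - A * lucas_u A B j"
  by (rule rec_eq[where A=A and B=B]) (auto simp: algebra_simps)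

lemma u_add: "2 * lucas_u A B (i + j) = lucas_u A B i * lucas_v A B j + lucas_u A B j * lucas_v A B i"
proof (rule rec_eq[where A=A and B=B and j=j and f="\<lambda>j. 2 * lucas_u A B (i + j)"])
  show "2 * lucas_u A B (i + 1) = lucas_u A B i * lucas_v A B 1 + lucas_u A B 1 * lucas_v A B i"
    using v_u[of A B i] by simp
qed (auto simp: algebra_simps)

lemma v_add: "2 * lucas_v A B (i + j) = lucas_v A B i * lucas_v A B j + (A^2 - 4*B) * lucas_u A B i * lucas_u A B j"
proof (rule rec_eq[where A=A and B=B and j=j and f="\<lambda>j. 2 * lucas_v A B (i + j)"])
  show "2 * lucas_v A B (i + 1) = lucas_v A B i * lucas_v A B 1 + (A^2 - 4*B) * lucas_u A B i * lucas_u A B 1"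
  proof -
    have "lucas_v A B (Suc i) = A * lucas_u A B (Suc i) - 2 * B * lucas_u A B i"
      unfolding v_u[of A B "Suc i"] by (simp add: algebra_simps)
    then show ?thesis unfolding v_u[of A B i] by (simp add: algebra_simps power2_eq_square)
  qed
qed (auto simp: algebra_simps)

lemma u_cassini: "lucas_u A B (Suc j)^2 - A * lucas_u A B j * lucas_u A B (Suc j) + B * lucas_u A B j ^ 2 = B ^ j"
proof (induction j)
  case (Suc j)
  have "lucas_u A B (Suc (Suc j))^2 - A * lucas_u A B (Suc j) * lucas_u A B (Suc (Suc j)) + B * lucas_u A B (Suc j) ^ 2
     = B * (lucas_u A B (Suc j)^2 - A * lucas_u A B j * lucas_u A B (Suc j) + B * lucas_u A B j ^ 2)"
    by (simp add: algebra_simps power2_eq_square)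
  with Suc show ?case by simp
qed simp

lemma vu_sq: "lucas_v A B j ^ 2 - (A^2 - 4*B) * lucas_u A B j ^ 2 = 4 * B ^ j"
proof -
  have "lucas_v A B j ^ 2 - (A^2 - 4*B) * lucas_u A B j ^ 2 = 4 * (lucas_u A B (Suc j)^2 - A * lucas_u A B j * lucas_u A B (Suc j) + B * lucas_u A B j ^ 2)"
    unfolding v_u[of A B j] by (simp add: algebra_simps power2_eq_square)
  thus ?thesis using u_cassini[of A B j] by simp
qed

lemma u_sub: "lucas_u A B (m + j) * lucas_v A B j - lucas_v A B (m + j) * lucas_u A B j = 2 * B ^ j * lucas_u A B m"
proof -
  have "2 * (lucas_u A B (m + j) * lucas_v A B j - lucas_v A B (m + j) * lucas_u A B j)
     = lucas_u A B m * (lucas_v A B j ^ 2 - (A^2 - 4*B) * lucas_u A B j ^ 2)"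
  proof -
    have "2 * (lucas_u A B (m + j) * lucas_v A B j - lucas_v A B (m + j) * lucas_u A B j)
      = (2 * lucas_u A B (m + j)) * lucas_v A B j - (2 * lucas_v A B (m + j)) * lucas_u A B j"
      by (simp add: algebra_simps)
    also have "\<dots> = lucas_u A B m * (lucas_v A B j ^ 2 - (A^2 - 4*B) * lucas_u A B j ^ 2)"
      unfolding u_add[of A B m j] v_add[of A B m j] by (simp add: algebra_simps power2_eq_square)
    finally show ?thesis .
  qed
  also have "\<dots> = 2 * (2 * B ^ j * lucas_u A B m)" using vu_sq[of A B j] by simp
  finally show ?thesis by simp
qed

lemma u_modB: "n \<ge> 1 \<Longrightarrow> B dvd (lucas_u A B n - A ^ (n - 1))"
proof (induction n)
  case (Suc n)
  show ?case
  proof (cases n)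
    case (Suc m)
    have "lucas_u A B (Suc (Suc m)) - A ^ Suc m = A * (lucas_u A B (Suc m) - A ^ m) - B * lucas_u A B m"
      by (simp add: algebra_simps)
    have "B dvd A * (lucas_u A B (Suc m) - A ^ m) - B * lucas_u A B m"
      using Suc.IH Suc by simp
    with Suc show ?thesis by (simp add: algebra_simps)
  qed simp
qed simp



definition dI :: "int \<Rightarrow> rat \<Rightarrow> bool" where
  "dI d x = (\<exists>p q. q \<noteq> 0 \<and> coprime q d \<and> x = of_int p / of_int q)"
definition dJ :: "int \<Rightarrow> rat \<Rightarrow> bool" where
  "dJ d x = (\<exists>p q. q \<noteq> 0 \<and> coprime q d \<and> x = of_int p / of_int q \<and> d dvd p)"

lemma dI_int: "dI d (of_int a)"
  unfolding dI_def by (rule exI[of _ a], rule exI[of _ 1]) simp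

lemma dI_inv: assumes "coprime a d" shows "dI d (of_int b / of_int a)"
proof (cases "a = 0")
  case True thus ?thesis unfolding dI_def by (intro exI[of _ 0] exI[of _ 1]) auto
next
  case False thus ?thesis unfolding dI_def using assms by (intro exI[of _ b] exI[of _ a]) auto
qed

lemma dI_add: "dI d x \<Longrightarrow> dI d y \<Longrightarrow> dI d (x + y)"
  unfolding dI_def
proof (elim exE conjE)
  fix p q p' q' assume *: "q \<noteq> 0" "coprime q d" "x = of_int p / of_int q"
    "q' \<noteq> 0" "coprime q' d" "y = of_int p' / of_int q'"
  show "\<exists>p q. q \<noteq> 0 \<and> coprime q d \<and> x + y = of_int p / of_int q"
    by (rule exI[of _ "p*q' + p'*q"], rule exI[of _ "q*q'"]) (use * in \<open>auto simp: field_simps\<close>)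
qed

lemma dI_mult: "dI d x \<Longrightarrow> dI d y \<Longrightarrow> dI d (x * y)"
  unfolding dI_def
proof (elim exE conjE)
  fix p q p' q' assume *: "q \<noteq> 0" "coprime q d" "x = of_int p / of_int q"
    "q' \<noteq> 0" "coprime q' d" "y = of_int p' / of_int q'"
  show "\<exists>p q. q \<noteq> 0 \<and> coprime q d \<and> x * y = of_int p / of_int q"
    by (rule exI[of _ "p*p'"], rule exI[of _ "q*q'"]) (use * in \<open>auto simp: *(3) *(6)\<close>)
qed

lemma dI_uminus: "dI d x \<Longrightarrow> dI d (- x)"
  using dI_mult[OF dI_int[of d "-1"]] by simp

lemma dI_diff: "dI d x \<Longrightarrow> dI d y \<Longrightarrow> dI d (x - y)"
  using dI_add[of d x "-y"] dI_uminus by simp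

lemma dI_sum: "(\<And>i. i \<in> S \<Longrightarrow> dI d (f i)) \<Longrightarrow> dI d (sum f S)"
  by (induction S rule: infinite_finite_induct) (auto intro: dI_add simp: dI_int[of d 0, simplified])

lemma dJ_int: "d dvd a \<Longrightarrow> dJ d (of_int a)"
  unfolding dJ_def by (rule exI[of _ a], rule exI[of _ 1]) simp

lemma dJ_zero: "dJ d 0"
  using dJ_int[of d 0] by simp

lemma dJ_frac: assumes "d dvd a" "coprime b d" shows "dJ d (of_int a / of_int b)"
proof (cases "b = 0")
  case True thus ?thesis unfolding dJ_def by (intro exI[of _ 0] exI[of _ 1]) auto
next
  case False thus ?thesis unfolding dJ_def using assms by (intro exI[of _ a] exI[of _ b]) auto
qed

lemma dJ_add: "dJ d x \<Longrightarrow> dJ d y \<Longrightarrow> dJ d (x + y)"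
  unfolding dJ_def
proof (elim exE conjE)
  fix p q p' q' assume *: "q \<noteq> 0" "coprime q d" "x = of_int p / of_int q" "d dvd p"
    "q' \<noteq> 0" "coprime q' d" "y = of_int p' / of_int q'" "d dvd p'"
  show "\<exists>p q. q \<noteq> 0 \<and> coprime q d \<and> x + y = of_int p / of_int q \<and> d dvd p"
    by (rule exI[of _ "p*q' + p'*q"], rule exI[of _ "q*q'"]) (use * in \<open>auto simp: field_simps\<close>)
qed

lemma dJ_mult: "dJ d x \<Longrightarrow> dI d y \<Longrightarrow> dJ d (x * y)"
  unfolding dJ_def dI_def
proof (elim exE conjE)
  fix p q p' q' assume *: "q \<noteq> 0" "coprime q d" "x = of_int p / of_int q" "d dvd p"
    "q' \<noteq> 0" "coprime q' d" "y = of_int p' / of_int q'"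
  show "\<exists>p q. q \<noteq> 0 \<and> coprime q d \<and> x * y = of_int p / of_int q \<and> d dvd p"
    by (rule exI[of _ "p*p'"], rule exI[of _ "q*q'"]) (use * in \<open>auto simp: *(3) *(6)\<close>)
qed

lemma dJ_mult': "dI d y \<Longrightarrow> dJ d x \<Longrightarrow> dJ d (y * x)"
  using dJ_mult[of d x y] by (simp add: mult.commute)

lemma dJ_uminus: "dJ d x \<Longrightarrow> dJ d (- x)"
  using dJ_mult[OF _ dI_int[of d "-1"]] by simp

lemma dJ_diff: "dJ d x \<Longrightarrow> dJ d y \<Longrightarrow> dJ d (x - y)"
  using dJ_add[of d x "-y"] dJ_uminus by simp

lemma dJ_sum: "(\<And>i. i \<in> S \<Longrightarrow> dJ d (f i)) \<Longrightarrow> dJ d (sum f S)"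
  by (induction S rule: infinite_finite_induct) (auto intro: dJ_add simp: dJ_zero)

lemma dJ_sq: "d dvd a \<Longrightarrow> dJ d x \<Longrightarrow> dJ (d^2) (of_int a * x)"
  unfolding dJ_def
proof (elim exE conjE)
  fix p q assume *: "q \<noteq> 0" "coprime q d" "x = of_int p / of_int q" "d dvd p" "d dvd a"
  show "\<exists>p q. q \<noteq> 0 \<and> coprime q (d^2) \<and> of_int a * x = of_int p / of_int q \<and> d^2 dvd p"
    by (rule exI[of _ "a*p"], rule exI[of _ "q"]) (use * in \<open>auto simp: field_simps power2_eq_square intro: mult_dvd_mono\<close>)
qed

lemma dJ_unit: "is_unit d \<Longrightarrow> dJ d x"
  unfolding dJ_def
  apply (rule exI[of _ "fst (quotient_of x)"], rule exI[of _ "snd (quotient_of x)"])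
  using quotient_of_denom_pos'[of x] quotient_of_div[of x "fst (quotient_of x)" "snd (quotient_of x)"]
  by (auto intro: is_unit_right_imp_coprime unit_imp_dvd)

lemma dJ_zero_all: assumes "\<And>k::nat. \<exists>d. d \<ge> int k \<and> dJ d x" shows "x = 0"
proof (rule ccontr)
  assume "x \<noteq> 0"
  obtain a b where ab: "quotient_of x = (a, b)" by (cases "quotient_of x")
  have xab: "x = of_int a / of_int b" and bpos: "b > 0" and cop: "coprime a b"
    using quotient_of_div[OF ab] quotient_of_denom_pos[OF ab] quotient_of_coprime[OF ab] by auto
  have a0: "a \<noteq> 0" using xab \<open>x \<noteq> 0\<close> by auto
  obtain d where d: "d \<ge> int (nat \<bar>a\<bar> + 1)" "dJ d x" using assms by blast
  then obtain p q where pq: "q \<noteq> 0" "coprime q d" "x = of_int p / of_int q" "d dvd p"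
    unfolding dJ_def by blast
  have "of_int p * of_int b = (of_int a * of_int q :: rat)"
    using pq(1,3) xab bpos by (simp add: field_simps)
  hence "p * b = a * q" by (metis of_int_eq_iff of_int_mult)
  hence "d dvd a * q" using pq(4) by (metis dvd_mult2)
  hence "d dvd a" using pq(2) by (metis coprime_commute coprime_dvd_mult_left_iff)
  hence "\<bar>d\<bar> \<le> \<bar>a\<bar>" using a0 by (simp add: dvd_imp_le_int)
  thus False using d(1) by simp
qed



definition cc :: "int \<Rightarrow> int \<Rightarrow> nat \<Rightarrow> rat" where
  "cc A B j = of_int (lucas_v A B j) / of_int (lucas_u A B j)"

lemma cc_0: "cc A B 0 = 0" by (simp add: cc_def)

lemma u2: "lucas_u A B 2 = A" by (simp add: eval_nat_numeral)
lemma u3: "lucas_u A B 3 = A^2 - B" by (simp add: eval_nat_numeral algebra_simps power2_eq_square)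
lemma u4: "lucas_u A B 4 = A * (A^2 - 2*B)" by (simp add: eval_nat_numeral algebra_simps power2_eq_square)

lemma cc_add:
  assumes "lucas_u A B i \<noteq> 0" "lucas_u A B j \<noteq> 0" "lucas_u A B (i+j) \<noteq> 0"
  shows "cc A B (i+j) * (cc A B i + cc A B j) = cc A B i * cc A B j + of_int (A^2 - 4*B)"
proof -
  let ?ui = "of_int (lucas_u A B i) :: rat" and ?uj = "of_int (lucas_u A B j) :: rat"
  and ?uij = "of_int (lucas_u A B (i+j)) :: rat" and ?vi = "of_int (lucas_v A B i) :: rat"
  and ?vj = "of_int (lucas_v A B j) :: rat" and ?vij = "of_int (lucas_v A B (i+j)) :: rat"
  have h1: "2 * ?uij = ?ui * ?vj + ?uj * ?vi"
    using arg_cong[OF u_add[of A B i j], of "of_int :: int \<Rightarrow> rat"] by simp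
  have h2: "2 * ?vij = ?vi * ?vj + of_int (A^2 - 4*B) * ?ui * ?uj"
    using arg_cong[OF v_add[of A B i j], of "of_int :: int \<Rightarrow> rat"] by simp
  have "cc A B i + cc A B j = 2 * ?uij / (?ui * ?uj)"
    unfolding cc_def h1 using assms by (simp add: field_simps)
  hence "cc A B (i+j) * (cc A B i + cc A B j) = 2 * ?vij / (?ui * ?uj)"
    unfolding cc_def using assms by (simp add: field_simps)
  also have "\<dots> = cc A B i * cc A B j + of_int (A^2 - 4*B)"
    unfolding h2 cc_def using assms by (simp add: field_simps)
  finally show ?thesis .
qed

lemma mod3_lemma:
  fixes A B :: int
  assumes "\<not> 3 dvd A" "\<not> 3 dvd B"
  shows "3 dvd (A^2 - B) \<or> 3 dvd (A^2 - 2*B)"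
proof -
  have a: "A mod 3 = 1 \<or> A mod 3 = 2" using assms by presburger
  have b: "B mod 3 = 1 \<or> B mod 3 = 2" using assms by presburger
  have "A^2 mod 3 = ((A mod 3)^2) mod 3" by (simp add: power_mod)
  hence a2: "A^2 mod 3 = 1" using a by auto
  show ?thesis using a2 b by presburger
qed

lemma periodic_sum:
  fixes h :: "nat \<Rightarrow> 'a::cancel_comm_monoid_add"
  assumes "\<And>m. h (m + n) = h m"
  shows "(\<Sum>j<n. h (i + j)) = (\<Sum>j<n. h j)"
proof (induction i)
  case (Suc i)
  have "(\<Sum>j<n. h (Suc i + j)) = (\<Sum>j<n. h (i + Suc j))" by simp
  also have "\<dots> + h (i + 0) = (\<Sum>j<Suc n. h (i + j))"
    by (subst sum.lessThan_Suc_shift) (simp add: add.commute)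
  also have "\<dots> = (\<Sum>j<n. h (i + j)) + h (i + n)" by simp
  also have "h (i + n) = h (i + 0)" using assms by simp
  finally show ?case using Suc by simp
qed simp

context
  fixes A B :: int and n :: nat and d :: int
  assumes A0: "A \<noteq> 0" and B0: "B \<noteq> 0" and n5: "n \<ge> 5"
    and dn: "d dvd lucas_u A B n"
    and cop: "\<forall>j\<in>{1..<n}. coprime d (lucas_u A B j)"
    and nu: "\<not> is_unit d"
begin

abbreviation U where "U \<equiv> lucas_u A B"
abbreviation V where "V \<equiv> lucas_v A B"
abbreviation c where "c \<equiv> cc A B"
abbreviation D where "D \<equiv> A^2 - 4*B"

lemma copj: "j \<in> {1..<n} \<Longrightarrow> coprime (U j) d"
  using cop by (simp add: coprime_commute)

lemma Unz: "j \<in> {1..<n} \<Longrightarrow> U j \<noteq> 0"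
  using cop nu by fastforce

lemma cop_A: "coprime d A"
proof -
  have "2 \<in> {1..<n}" using n5 by simp
  thus ?thesis using cop u2[of A B] by metis
qed

lemma inI: "j \<in> {1..<n} \<Longrightarrow> n - j \<in> {1..<n}" by auto

lemma cop_B: "coprime d B"
proof (rule coprimeI)
  fix g assume g: "g dvd d" "g dvd B"
  have "B dvd U n - A ^ (n - 1)" using u_modB[of n B A] n5 by simp
  hence "g dvd U n - A ^ (n - 1)" using g by (meson dvd_trans)
  moreover have "g dvd U n" using g dn by (meson dvd_trans)
  ultimately have "g dvd A ^ (n - 1)" by (metis dvd_diff_commute dvd_trans dvd_refl dvd_diff add_diff_cancel_left' diff_add_cancel)
  moreover have "coprime d (A ^ (n - 1))" using cop_A by simp
  ultimately show "is_unit g" using g(1) coprime_common_divisor by blast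
qed

lemma cop_2: "coprime d 2"
proof (rule ccontr)
  assume "\<not> coprime d 2"
  hence d2: "2 dvd d" using prime_imp_coprime[of "2::int" d] by (auto simp: coprime_commute)
  have "\<not> 2 dvd A" using cop_A d2 coprime_common_divisor[of d A 2] by auto
  moreover have "\<not> 2 dvd B" using cop_B d2 coprime_common_divisor[of d B 2] by auto
  ultimately have "2 dvd U 3" unfolding u3 by simp
  moreover have "3 \<in> {1..<n}" using n5 by simp
  ultimately show False using cop d2 coprime_common_divisor[of d "U 3" 2] by auto
qed

lemma cop_3: "coprime d 3"
proof (rule ccontr)
  assume "\<not> coprime d 3"
  hence d3: "3 dvd d" using prime_imp_coprime[of "3::int" d] by (auto simp: coprime_commute)
  have "\<not> 3 dvd A" using cop_A d3 coprime_common_divisor[of d A 3] by auto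
  moreover have "\<not> 3 dvd B" using cop_B d3 coprime_common_divisor[of d B 3] by auto
  ultimately have "3 dvd U 3 \<or> 3 dvd U 4" unfolding u3 u4 using mod3_lemma[of A B] by (auto intro: dvd_mult)
  moreover have "3 \<in> {1..<n}" "4 \<in> {1..<n}" using n5 by auto
  ultimately show False using cop d3 coprime_common_divisor[of d "U 3" 3] coprime_common_divisor[of d "U 4" 3] by auto
qed

lemma cop_V: "coprime d (V n)"
proof -
  have c4: "coprime d (4 * B ^ n)" using cop_2 cop_B
    by (metis coprime_mult_right_iff coprime_power_right_iff power2_eq_square numeral_Bit0 mult_2)
  have eq: "V n ^ 2 = 4 * B ^ n + D * U n ^ 2" using vu_sq[of A B n] by simp
  have "coprime d (V n ^ 2)"
  proof (rule coprimeI)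
    fix g assume g: "g dvd d" "g dvd V n ^ 2"
    have "g dvd D * U n ^ 2" using g(1) dn by (simp add: dvd_trans power2_eq_square)
    hence "g dvd 4 * B ^ n" using g(2) eq by (metis add_diff_cancel_right' dvd_diff)
    thus "is_unit g" using g(1) c4 coprime_common_divisor by blast
  qed
  thus ?thesis by simp
qed

lemma cI: "j \<in> {1..<n} \<Longrightarrow> dI d (c j)"
  unfolding cc_def by (rule dI_inv[OF copj])

lemma pair_eq: assumes "j \<in> {1..<n}"
  shows "c j + c (n - j) = of_int (2 * U n) / of_int (U j * U (n - j))"
proof -
  have h: "2 * U n = U j * V (n - j) + U (n - j) * V j"
    using u_add[of A B j "n - j"] assms by simp
  show ?thesis unfolding cc_def h using Unz[OF assms] Unz[OF inI[OF assms]]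
    by (simp add: field_simps)
qed

lemma pairJ: "j \<in> {1..<n} \<Longrightarrow> dJ d (c j + c (n - j))"
  unfolding pair_eq by (rule dJ_frac) (use dn copj inI in auto)

definition "T = (\<Sum>j\<in>{1..<n}. 1 / (of_int (U j) * of_int (U (n - j)) :: rat))"
definition "sig1 = (\<Sum>j\<in>{1..<n}. c j)"
definition "sig2 = (\<Sum>j\<in>{1..<n}. c j ^ 2)"

lemma S_eq: "sig1 = of_int (U n) * T"
proof -
  have r: "sig1 = (\<Sum>j\<in>{1..<n}. c (n - j))"
    unfolding sig1_def by (subst sum.atLeastLessThan_rev) simp
  have "2 * sig1 = sig1 + sig1" by simp
  also have "\<dots> = (\<Sum>j\<in>{1..<n}. c j + c (n - j))"
    unfolding sum.distrib by (subst (2) r) (simp add: sig1_def)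
  also have "\<dots> = (\<Sum>j\<in>{1..<n}. 2 * of_int (U n) * (1 / (of_int (U j) * of_int (U (n - j)))))"
    by (rule sum.cong) (simp_all add: pair_eq)
  also have "\<dots> = 2 * (of_int (U n) * T)"
    by (simp add: T_def sum_distrib_left mult.assoc)
  finally show ?thesis by simp
qed

lemma TI: "dI d T"
  unfolding T_def
proof (rule dI_sum)
  fix j assume j: "j \<in> {1..<n}"
  have "1 / (of_int (U j) * of_int (U (n - j)) :: rat) = of_int 1 / of_int (U j * U (n - j))" by simp
  thus "dI d (1 / (of_int (U j) * of_int (U (n - j))))"
    using dI_inv[of "U j * U (n - j)" d 1] copj[OF j] copj[OF inI[OF j]] by simp
qed

lemma sig1J: "dJ d sig1"
  unfolding S_eq by (rule dJ_mult[OF dJ_int[OF dn] TI])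

lemma Vn0: "V n \<noteq> 0" using cop_V nu by auto

lemma Xj: assumes j: "j \<in> {1..<n}"
  shows "dJ d (1 / (of_int (U j) * of_int (U (n - j))) + (c j ^ 2 - of_int D) / (2 * of_int (V n)))"
proof -
  define a where "a = U j"
  define b where "b = U (n - j)"
  define w where "w = V n"
  define x where "x = V j"
  define un where "un = U n"
  have e1: "un * x - w * a = 2 * B ^ j * b"
    using u_sub[of A B "n - j" j] j unfolding a_def b_def w_def x_def un_def by simp
  have e2: "x ^ 2 - D * a ^ 2 = 4 * B ^ j"
    using vu_sq[of A B j] unfolding a_def x_def by simp
  have ie: "2 * a * w + b * (x ^ 2 - D * a ^ 2) = 2 * un * x"
  proof -
    have "b * (x ^ 2 - D * a ^ 2) = 2 * (2 * B ^ j * b)" unfolding e2 by simp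
    also have "\<dots> = 2 * (un * x - w * a)" unfolding e1 ..
    finally show ?thesis by (simp add: algebra_simps)
  qed
  have re: "2 * of_int a * of_int w + of_int b * ((of_int x)^2 - of_int D * (of_int a)^2) = (2 * of_int un * of_int x :: rat)"
    using arg_cong[OF ie, of "of_int :: int \<Rightarrow> rat"] by simp
  have a0: "a \<noteq> 0" "b \<noteq> 0" "w \<noteq> 0" using Unz[OF j] Unz[OF inI[OF j]] Vn0 unfolding a_def b_def w_def by auto
  have "1 / (of_int a * of_int b) + ((of_int x / of_int a) ^ 2 - of_int D) / (2 * of_int w)
        = (of_int (un * x) / of_int (a^2 * b * w) :: rat)"
    using a0 re by (simp add: field_simps power2_eq_square)
  moreover have "dJ d (of_int (un * x) / of_int (a^2 * b * w))"
    by (rule dJ_frac) (use dn copj[OF j] copj[OF inI[OF j]] cop_V in \<open>auto simp: un_def a_def b_def w_def coprime_commute\<close>)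
  ultimately show ?thesis unfolding cc_def a_def b_def w_def x_def un_def by simp
qed

lemma sumX: "dJ d (T + (sig2 - of_int ((int n - 1) * D)) / (2 * of_int (V n)))"
proof -
  have "dJ d (\<Sum>j\<in>{1..<n}. 1 / (of_int (U j) * of_int (U (n - j))) + (c j ^ 2 - of_int D) / (2 * of_int (V n)))"
    by (rule dJ_sum) (rule Xj)
  moreover have "(\<Sum>j\<in>{1..<n}. 1 / (of_int (U j) * of_int (U (n - j))) + (c j ^ 2 - of_int D) / (2 * of_int (V n)))
      = T + (sig2 - of_int ((int n - 1) * D)) / (2 * of_int (V n))"
    using n5 by (simp add: sum.distrib T_def sig2_def sum_divide_distrib[symmetric] sum_subtractf of_nat_diff)
  ultimately show ?thesis by simp
qed

lemma split0: "(\<Sum>j<n. f j) = f 0 + (\<Sum>j\<in>{1..<n}. f j)" for f :: "nat \<Rightarrow> rat"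
proof -
  have "{..<n} = insert 0 {1..<n}" using n5 by auto
  thus ?thesis by simp
qed

lemma rot: assumes "i \<in> {1..<n}" shows "(\<Sum>j\<in>{1..<n}. c ((i + j) mod n)) = sig1 - c i"
proof -
  have "(\<Sum>j<n. c ((i + j) mod n)) = (\<Sum>j<n. c (j mod n))"
    by (rule periodic_sum[where h="\<lambda>m. c (m mod n)"]) simp
  also have "\<dots> = (\<Sum>j<n. c j)" by (rule sum.cong) auto
  also have "\<dots> = sig1" unfolding split0 by (simp add: cc_0 sig1_def)
  finally show ?thesis unfolding split0 using assms by simp
qed

definition "E i j = c ((i + j) mod n) * (c i + c j) - c i * c j - of_int D"

lemma EJ: assumes i: "i \<in> {1..<n}" and j: "j \<in> {1..<n}" and ne: "j \<noteq> n - i"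
  shows "dJ d (E i j)"
proof (cases "i + j < n")
  case True
  hence "(i + j) mod n = i + j" "i + j \<in> {1..<n}" using i by auto
  hence "E i j = 0" unfolding E_def using cc_add[of A B i j] Unz i j by auto
  thus ?thesis by (simp add: dJ_zero)
next
  case False
  hence gt: "i + j > n" using ne i j by auto
  define k where "k = i + j - n"
  have k: "k \<in> {1..<n}" "(i + j) mod n = k" using gt i j unfolding k_def
    by (auto simp: le_mod_geq)
  have s: "(n - i) + (n - j) = n - k" using gt i j unfolding k_def by auto
  have key: "c (n - k) * (c (n - i) + c (n - j)) = c (n - i) * c (n - j) + of_int D"
    using cc_add[of A B "n - i" "n - j"] s Unz inI i j k by auto
  have id: "E i j = (c k + c (n - k)) * (c i + c j) - c (n - k) * ((c i + c (n - i)) + (c j + c (n - j)))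
      - (c i + c (n - i)) * (c j + c (n - j)) + (c i + c (n - i)) * c (n - j) + c (n - i) * (c j + c (n - j))"
    unfolding E_def k(2) using key by (simp add: algebra_simps)
  show ?thesis unfolding id
    by (intro dJ_add dJ_diff dJ_mult dJ_mult' pairJ cI dI_add inI i j k)
qed

lemma sum_s1: "(\<Sum>i\<in>{1..<n}. \<Sum>j\<in>{1..<n}. c ((i + j) mod n) * c i) = sig1 * sig1 - sig2"
proof -
  have "(\<Sum>i\<in>{1..<n}. \<Sum>j\<in>{1..<n}. c ((i + j) mod n) * c i) = (\<Sum>i\<in>{1..<n}. c i * (sig1 - c i))"
  proof (rule sum.cong[OF refl])
    fix i assume i: "i \<in> {1..<n}"
    show "(\<Sum>j\<in>{1..<n}. c ((i + j) mod n) * c i) = c i * (sig1 - c i)"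
    proof -
      have "(\<Sum>j\<in>{1..<n}. c ((i + j) mod n) * c i) = (\<Sum>j\<in>{1..<n}. c ((i + j) mod n)) * c i"
        by (simp add: sum_distrib_right)
      thus ?thesis unfolding rot[OF i] by (simp add: mult.commute)
    qed
  qed
  also have "\<dots> = sig1 * sig1 - sig2"
    by (simp add: right_diff_distrib sum_subtractf sum_distrib_right[symmetric] sig1_def sig2_def power2_eq_square)
  finally show ?thesis .
qed

lemma sum_s2: "(\<Sum>i\<in>{1..<n}. \<Sum>j\<in>{1..<n}. c ((i + j) mod n) * c j) = sig1 * sig1 - sig2"
proof -
  have "(\<Sum>i\<in>{1..<n}. \<Sum>j\<in>{1..<n}. c ((i + j) mod n) * c j) = (\<Sum>j\<in>{1..<n}. \<Sum>i\<in>{1..<n}. c ((j + i) mod n) * c j)"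
    by (subst sum.swap) (simp add: add.commute)
  thus ?thesis using sum_s1 by simp
qed

lemma sum_E: "(\<Sum>i\<in>{1..<n}. \<Sum>j\<in>{1..<n}. E i j) = sig1 * sig1 - 2 * sig2 - of_int ((int n - 1)^2 * D)"
proof -
  have "(\<Sum>i\<in>{1..<n}. \<Sum>j\<in>{1..<n}. E i j) =
     (\<Sum>i\<in>{1..<n}. \<Sum>j\<in>{1..<n}. c ((i + j) mod n) * c i) + (\<Sum>i\<in>{1..<n}. \<Sum>j\<in>{1..<n}. c ((i + j) mod n) * c j)
     - (\<Sum>i\<in>{1..<n}. \<Sum>j\<in>{1..<n}. c i * c j) - (\<Sum>i\<in>{1..<n}. \<Sum>j\<in>{1..<n}. of_int D)"
    unfolding E_def by (simp add: sum.distrib sum_subtractf algebra_simps)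
  also have "(\<Sum>i\<in>{1..<n}. \<Sum>j\<in>{1..<n}. c i * c j) = sig1 * sig1"
    by (simp add: sig1_def sum_product)
  also have "(\<Sum>i\<in>{1..<n}. \<Sum>j\<in>{1..<n}. (of_int D :: rat)) = of_int ((int n - 1)^2 * D)"
    using n5 by (simp add: of_nat_diff power2_eq_square)
  finally show ?thesis unfolding sum_s1 sum_s2 by simp
qed

lemma sum_rest: "dJ d ((\<Sum>i\<in>{1..<n}. \<Sum>j\<in>{1..<n}. E i j) - (\<Sum>i\<in>{1..<n}. E i (n - i)))"
proof -
  have "(\<Sum>i\<in>{1..<n}. \<Sum>j\<in>{1..<n}. E i j) - (\<Sum>i\<in>{1..<n}. E i (n - i))
     = (\<Sum>i\<in>{1..<n}. \<Sum>j\<in>{1..<n} - {n - i}. E i j)"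
    unfolding sum_subtractf[symmetric]
  proof (rule sum.cong[OF refl])
    fix i assume i: "i \<in> {1..<n}"
    show "(\<Sum>j\<in>{1..<n}. E i j) - E i (n - i) = (\<Sum>j\<in>{1..<n} - {n - i}. E i j)"
      using sum.remove[OF _ inI[OF i], of "E i"] by simp
  qed
  moreover have "dJ d (\<Sum>i\<in>{1..<n}. \<Sum>j\<in>{1..<n} - {n - i}. E i j)"
    by (intro dJ_sum EJ) auto
  ultimately show ?thesis by simp
qed

lemma E_diag: "i \<in> {1..<n} \<Longrightarrow> E i (n - i) = - (c i * c (n - i)) - of_int D"
  unfolding E_def by (simp add: cc_0)

lemma sum_diag: "(\<Sum>i\<in>{1..<n}. E i (n - i)) = - (\<Sum>i\<in>{1..<n}. c i * c (n - i)) - of_int ((int n - 1) * D)"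
proof -
  have "(\<Sum>i\<in>{1..<n}. E i (n - i)) = (\<Sum>i\<in>{1..<n}. - (c i * c (n - i)) - of_int D)"
    by (rule sum.cong[OF refl]) (rule E_diag)
  also have "\<dots> = - (\<Sum>i\<in>{1..<n}. c i * c (n - i)) - of_nat (n - 1) * of_int D"
    by (simp only: sum_subtractf sum_negf sum_constant card_atLeastLessThan)
  also have "\<dots> = - (\<Sum>i\<in>{1..<n}. c i * c (n - i)) - of_int ((int n - 1) * D)"
    using n5 by (simp add: of_nat_diff)
  finally show ?thesis .
qed

lemma W_J: "dJ d ((\<Sum>i\<in>{1..<n}. c i * c (n - i)) + sig2)"
proof -
  have "(\<Sum>i\<in>{1..<n}. c i * c (n - i)) + sig2 = (\<Sum>i\<in>{1..<n}. c i * (c i + c (n - i)))"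
    by (simp add: sig2_def sum.distrib[symmetric] algebra_simps power2_eq_square)
  moreover have "dJ d (\<Sum>i\<in>{1..<n}. c i * (c i + c (n - i)))"
    by (intro dJ_sum dJ_mult' cI pairJ) auto
  ultimately show ?thesis by simp
qed

lemma Y_J: "dJ d (3 * sig2 + of_int ((int n - 1) * (int n - 2) * D))"
proof -
  have sI: "dI d sig1" unfolding S_eq by (intro dI_mult dI_int TI)
  have eq: "3 * sig2 + of_int ((int n - 1) * (int n - 2) * D) =
     sig1 * sig1 + ((\<Sum>i\<in>{1..<n}. c i * c (n - i)) + sig2)
     - ((\<Sum>i\<in>{1..<n}. \<Sum>j\<in>{1..<n}. E i j) - (\<Sum>i\<in>{1..<n}. E i (n - i)))"
    unfolding sum_E sum_diag by (simp add: algebra_simps power2_eq_square)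
  moreover have "dJ d (sig1 * sig1 + ((\<Sum>i\<in>{1..<n}. c i * c (n - i)) + sig2)
     - ((\<Sum>i\<in>{1..<n}. \<Sum>j\<in>{1..<n}. E i j) - (\<Sum>i\<in>{1..<n}. E i (n - i))))"
    by (intro dJ_add dJ_diff dJ_mult sig1J sI W_J sum_rest)
  thus ?thesis using eq by (simp only:)
qed

lemma core_main:
  "dJ (d^2) ((\<Sum>j=1..n-1. of_int (lucas_v A B j) / of_int (lucas_u A B j)) -
           (of_int ((int n ^ 2 - 1) * (A ^ 2 - 4 * B)) / 6 *
              (of_int (lucas_u A B n) / of_int (lucas_v A B n))))"
proof -
  have iv: "{1..n-1} = {1..<n}" using n5 by auto
  have S: "(\<Sum>j=1..n-1. of_int (lucas_v A B j) / of_int (lucas_u A B j)) = sig1"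
    unfolding iv sig1_def cc_def ..
  define K where "K = of_int ((int n ^ 2 - 1) * D) / (6 * of_int (V n) :: rat)"
  have R: "of_int ((int n ^ 2 - 1) * (A ^ 2 - 4 * B)) / 6 * (of_int (lucas_u A B n) / of_int (lucas_v A B n))
      = of_int (U n) * K" unfolding K_def by simp
  have c6: "coprime (6 * V n) d" using cop_2 cop_3 cop_V
    by (metis coprime_commute coprime_mult_left_iff mult_2 numeral_Bit0 numeral_Bit1 numeral_One one_add_one)
  have i6: "dI d (1 / of_int (6 * V n))" using dI_inv[OF c6, of 1] by simp
  have TK: "T - K = (T + (sig2 - of_int ((int n - 1) * D)) / (2 * of_int (V n)))
     - (3 * sig2 + of_int ((int n - 1) * (int n - 2) * D)) * (1 / of_int (6 * V n))"
    unfolding K_def using Vn0 by (simp add: field_simps power2_eq_square)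
  have "dJ d (T - K)" unfolding TK by (intro dJ_diff dJ_mult sumX Y_J i6)
  hence "dJ (d^2) (of_int (U n) * (T - K))" by (rule dJ_sq[OF dn])
  thus ?thesis unfolding S R S_eq by (simp add: algebra_simps)
qed

end

lemma core:
  assumes "A \<noteq> 0" "B \<noteq> 0" "n \<ge> 5" "d dvd lucas_u A B n"
    "\<forall>j\<in>{1..<n}. coprime d (lucas_u A B j)"
  shows "dJ (d^2) ((\<Sum>j=1..n-1. of_int (lucas_v A B j) / of_int (lucas_u A B j)) -
           (of_int ((int n ^ 2 - 1) * (A ^ 2 - 4 * B)) / 6 *
              (of_int (lucas_u A B n) / of_int (lucas_v A B n))))"
proof (cases "is_unit d")
  case True thus ?thesis by (intro dJ_unit) (simp add: abs_square_eq_1)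
next
  case False thus ?thesis using core_main assms by blast
qed



lemma rat_cong_dJ: "rat_cong a b M = dJ M (a - b)"
  unfolding rat_cong_def dJ_def by blast

theorem theorem1p1:
  fixes A B :: int and n :: nat
  assumes "A \<noteq> 0" and "B \<noteq> 0" and "n \<ge> 5"
  shows "rat_cong
           (\<Sum>j=1..n-1. of_int (lucas_v A B j) / of_int (lucas_u A B j))
           (of_int ((int n ^ 2 - 1) * (A ^ 2 - 4 * B)) / 6 *
              (of_int (lucas_u A B n) / of_int (lucas_v A B n)))
           ((lucas_w A B n) ^ 2)"
proof -
  let ?S = "(\<Sum>j=1..n-1. of_int (lucas_v A B j) / of_int (lucas_u A B j)) :: rat"
  let ?R = "(of_int ((int n ^ 2 - 1) * (A ^ 2 - 4 * B)) / 6 *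
              (of_int (lucas_u A B n) / of_int (lucas_v A B n))) :: rat"
  define P where "P = (\<lambda>d::int. d dvd lucas_u A B n \<and> (\<forall>j\<in>{1..<n}. coprime d (lucas_u A B j)))"
  have w: "lucas_w A B n = Greatest P" unfolding lucas_w_def P_def ..
  have P1: "P 1" unfolding P_def by simp
  show ?thesis
  proof (cases "lucas_u A B n \<noteq> 0 \<or> (\<exists>j\<in>{1..<n}. lucas_u A B j = 0)")
    case True
    have ex: "\<exists>x. P x \<and> (\<forall>y. P y \<longrightarrow> y \<le> x)"
    proof (cases "lucas_u A B n \<noteq> 0")
      case nz: True
      have sub: "{d. P d} \<subseteq> {-\<bar>lucas_u A B n\<bar>..\<bar>lucas_u A B n\<bar>}"
        unfolding P_def using nz by (auto dest!: dvd_imp_le_int[OF nz] simp: abs_le_iff)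
      hence fin: "finite {d. P d}" by (rule finite_subset) simp
      have ne: "{d. P d} \<noteq> {}" using P1 by auto
      show ?thesis
        by (rule exI[of _ "Max {d. P d}"]) (use Max_in[OF fin ne] Max_ge[OF fin] in auto)
    next
      case False
      with True obtain j where j: "j \<in> {1..<n}" "lucas_u A B j = 0" by auto
      have "P y \<Longrightarrow> y \<le> 1" for y
      proof -
        assume "P y"
        hence "coprime y 0" unfolding P_def using j by metis
        hence "\<bar>y\<bar> = 1" by simp
        thus "y \<le> 1" by linarith
      qed
      thus ?thesis using P1 by blast
    qed
    then obtain x where x: "P x" "\<forall>y. P y \<longrightarrow> y \<le> x" by blast
    have "P (Greatest P)" by (rule GreatestI2_order[of P x]) (use x in auto)
    hence "dJ ((Greatest P)^2) (?S - ?R)" unfolding P_def using core assms by blast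
    thus ?thesis unfolding rat_cong_dJ w .
  next
    case False
    hence un: "lucas_u A B n = 0" and nz: "\<forall>j\<in>{1..<n}. lucas_u A B j \<noteq> 0" by auto
    define Q where "Q = (\<Prod>j\<in>{1..<n}. \<bar>lucas_u A B j\<bar>)"
    have Q1: "Q \<ge> 1" unfolding Q_def using nz
    proof (intro prod_ge_1)
      fix j assume "j \<in> {1..<n}"
      hence "lucas_u A B j \<noteq> 0" using nz by blast
      thus "1 \<le> \<bar>lucas_u A B j\<bar>" by linarith
    qed
    have "?S - ?R = 0"
    proof (rule dJ_zero_all)
      fix k :: nat
      define d where "d = 1 + int k * Q"
      have dk: "d \<ge> int k" unfolding d_def using Q1
        by (metis add.commute le_add_same_cancel2 mult_le_cancel_left1 of_nat_0_le_iff order.trans zero_le_one linorder_not_le less_add_one mult_right_mono mult_1_right order_less_imp_le)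
      have cp: "\<forall>j\<in>{1..<n}. coprime d (lucas_u A B j)"
      proof
        fix j assume j: "j \<in> {1..<n}"
        have "lucas_u A B j dvd Q" unfolding Q_def using j
          using dvd_prodI[of "{1..<n}" j "\<lambda>j. \<bar>lucas_u A B j\<bar>"] by simp
        then obtain m where m: "Q = lucas_u A B j * m" by blast
        show "coprime d (lucas_u A B j)"
        proof (rule coprimeI)
          fix g assume g: "g dvd d" "g dvd lucas_u A B j"
          have "g dvd int k * Q" using g(2) m by simp
          hence "g dvd 1" using g(1) unfolding d_def by (metis add_diff_cancel_right' dvd_diff)
          thus "is_unit g" .
        qed
      qed
      have "dJ (d^2) (?S - ?R)" using core[OF assms] un cp by simp
      moreover have "d^2 \<ge> int k" using dk Q1 unfolding d_def
        by (smt (verit) mult_nonneg_nonneg of_nat_0_le_iff power2_eq_square mult_le_cancel_left1)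
      ultimately show "\<exists>d. d \<ge> int k \<and> dJ d (?S - ?R)" by blast
    qed
    thus ?thesis unfolding rat_cong_dJ by (simp add: dJ_zero)
  qed
qed

end
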